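(* Assume $p\ge2$ and $\hat\pi_k(x)>0$ for all $x\in\mathcal X_0$ and $k\in[1,p]$. Consider the following iteration for $T\ge1$: $\lambda_0(k)=1/p$, $g_0(x,k)=1/p$; for $t=0,\dots,T-1$: set $\ell_t(k)=D_{KL}(\hat{\mathsf p}_k\|\pi_{g_t})$; set $\lambda_{t+1}(k)=\lambda_t(k)e^{\eta_\lambda\ell_t(k)}/\sum_j\lambda_t(j)e^{\eta_\lambda\ell_t(j)}$; set $v_t(x,k)=-\frac{\hat{\mathsf p}_{\lambda_{t+1}}(x)}{\pi_{g_t}(x)}\hat\pi_k(x)$ for all $(x,k)\in\mathcal X_0\times[1,p]$; set $g_{t+1}=\Pi_{\mathcal G_1}(g_t-\eta_gv_t)$, where $\Pi_{\mathcal G_1}$ is the Euclidean projection onto $\mathcal G_1\subset\mathbb R^{\mathcal X_0\times[1,p]}$. Let $\bar g_T=\frac1T\sum_{t=1}^Tg_t$ and $\tilde V=\min_{g\in\mathcal G_1}\max_{\lambda\in\Delta}\tilde L(\lambda,g)$. Then there are constants $a,b,C>0$ depending only on $\mathcal G_1$, $\sup_{g\in\mathcal G_1,k}D_{KL}(\hat{\mathsf p}_k\|\pi_g)$ and $\sup_{g\in\mathcal G_1,\lambda\in\Delta}\|\nabla_g\tilde L(\lambda,g)\|_2$ (all finite under the positivity assumption) such that, with step sizes $\eta_\lambda=a/\sqrt T$ and $\eta_g=b/\sqrt T$, $$\max_{\lambda\in\Delta}\tilde L(\lambda,\bar g_T)-\tilde V\le C\sqrt{\frac{\log p}{T}} 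.$$
   Context: Fix an integer $p\ge 1$, $[1,p]=\{1,\dots,p\}$, $\Delta=\{\lambda\in\mathbb R^p:\lambda_k\ge 0,\ \sum_k\lambda_k=1\}$. Let $\hat{\mathsf p}_1,\dots,\hat{\mathsf p}_p$ be probability distributions with finite supports, $\mathcal X_0=\bigcup_k\mathrm{supp}(\hat{\mathsf p}_k)$, and $\hat\pi_1,\dots,\hat\pi_p$ probability distributions on $\mathcal X_0$. A gate is $g:\mathcal X_0\times[1,p]\to[0,1]$ with $\sum_kg(x,k)=1$ for each $x$; $\pi_g(x)=\sum_kg(x,k)\hat\pi_k(x)$, $Z_g=\sum_{x\in\mathcal X_0}\pi_g(x)$, $\mathcal G_1=\{g:Z_g=1\}$ (a compact convex subset of $\mathbb R^{\mathcal X_0\times[1,p]}$). For $\lambda\in\Delta$, $\hat{\mathsf p}_\lambda=\sum_k\lambda_k\hat{\mathsf p}_k$. $D_{KL}(P\|Q)=\sum_xP(x)\log\frac{P(x)}{Q(x)}$. The linearized payoff is $\tilde L(\lambda,g)=\sum_{k=1}^p\lambda_kD_{KL}(\hat{\mathsf p}_k\|\pi_g)$. *)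

theory Defs
  imports "HOL-Analysis.Analysis" "HOL-Probability.Probability_Mass_Function"
begin

definition X0 :: "nat \<Rightarrow> (nat \<Rightarrow> 'a pmf) \<Rightarrow> 'a set" where
  "X0 p ph = (\<Union>k\<in>{1..p}. set_pmf (ph k))"

text \<open>Gates are represented as functions 'a => nat => real, extensional
 (zero outside X_0 x [1,p]); this realizes R^(X_0 x [1,p]).\<close>

definition pi_g :: "nat \<Rightarrow> (nat \<Rightarrow> 'a pmf) \<Rightarrow> ('a \<Rightarrow> nat \<Rightarrow> real) \<Rightarrow> 'a \<Rightarrow> real" where
  "pi_g p pih g x = (\<Sum>k=1..p. g x k * pmf (pih k) x)"

definition Z_g :: "nat \<Rightarrow> (nat \<Rightarrow> 'a pmf) \<Rightarrow> (nat \<Rightarrow> 'a pmf) \<Rightarrow> ('a \<Rightarrow> nat \<Rightarrow> real) \<Rightarrow> real" where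
  "Z_g p ph pih g = (\<Sum>x\<in>X0 p ph. pi_g p pih g x)"

definition is_gate :: "nat \<Rightarrow> 'a set \<Rightarrow> ('a \<Rightarrow> nat \<Rightarrow> real) \<Rightarrow> bool" where
  "is_gate p X g \<longleftrightarrow>
     (\<forall>x\<in>X. \<forall>k\<in>{1..p}. 0 \<le> g x k \<and> g x k \<le> 1) \<and>
     (\<forall>x\<in>X. (\<Sum>k=1..p. g x k) = 1) \<and>
     (\<forall>x k. x \<notin> X \<or> k \<notin> {1..p} \<longrightarrow> g x k = 0)"

definition G1 :: "nat \<Rightarrow> (nat \<Rightarrow> 'a pmf) \<Rightarrow> (nat \<Rightarrow> 'a pmf) \<Rightarrow> ('a \<Rightarrow> nat \<Rightarrow> real) set" where
  "G1 p ph pih = {g. is_gate p (X0 p ph) g \<and> Z_g p ph pih g = 1}"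

definition prob_simplex :: "nat \<Rightarrow> (nat \<Rightarrow> real) set" where
  "prob_simplex p = {l. (\<forall>k\<in>{1..p}. 0 \<le> l k) \<and> (\<Sum>k=1..p. l k) = 1 \<and> (\<forall>k. k \<notin> {1..p} \<longrightarrow> l k = 0)}"

definition D_KL :: "'a pmf \<Rightarrow> ('a \<Rightarrow> real) \<Rightarrow> real" where
  "D_KL P Q = (\<Sum>x\<in>set_pmf P. pmf P x * ln (pmf P x / Q x))"

definition Ltil :: "nat \<Rightarrow> (nat \<Rightarrow> 'a pmf) \<Rightarrow> (nat \<Rightarrow> 'a pmf) \<Rightarrow> (nat \<Rightarrow> real) \<Rightarrow> ('a \<Rightarrow> nat \<Rightarrow> real) \<Rightarrow> real" where
  "Ltil p ph pih l g = (\<Sum>k=1..p. l k * D_KL (ph k) (pi_g p pih g))"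

definition p_mix :: "nat \<Rightarrow> (nat \<Rightarrow> 'a pmf) \<Rightarrow> (nat \<Rightarrow> real) \<Rightarrow> 'a \<Rightarrow> real" where
  "p_mix p ph l x = (\<Sum>k=1..p. l k * pmf (ph k) x)"

text \<open>Gradient of Ltil in g: d/dg(x,k) Ltil(l,g) = - ph_l(x) / pi_g(x) * pih_k(x)
 on X_0 x [1,p] (extended by zero).\<close>
definition grad_g :: "nat \<Rightarrow> (nat \<Rightarrow> 'a pmf) \<Rightarrow> (nat \<Rightarrow> 'a pmf) \<Rightarrow> (nat \<Rightarrow> real) \<Rightarrow> ('a \<Rightarrow> nat \<Rightarrow> real) \<Rightarrow> 'a \<Rightarrow> nat \<Rightarrow> real" where
  "grad_g p ph pih l g x k =
     (if x \<in> X0 p ph \<and> k \<in> {1..p} then - (p_mix p ph l x / pi_g p pih g x) * pmf (pih k) x else 0)"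

definition sqdist :: "nat \<Rightarrow> 'a set \<Rightarrow> ('a \<Rightarrow> nat \<Rightarrow> real) \<Rightarrow> ('a \<Rightarrow> nat \<Rightarrow> real) \<Rightarrow> real" where
  "sqdist p X u w = (\<Sum>x\<in>X. \<Sum>k=1..p. (u x k - w x k)^2)"

definition enorm :: "nat \<Rightarrow> 'a set \<Rightarrow> ('a \<Rightarrow> nat \<Rightarrow> real) \<Rightarrow> real" where
  "enorm p X u = sqrt (\<Sum>x\<in>X. \<Sum>k=1..p. (u x k)^2)"

definition proj :: "nat \<Rightarrow> 'a set \<Rightarrow> ('a \<Rightarrow> nat \<Rightarrow> real) set \<Rightarrow> ('a \<Rightarrow> nat \<Rightarrow> real) \<Rightarrow> ('a \<Rightarrow> nat \<Rightarrow> real)" where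
  "proj p X S y = (THE z. z \<in> S \<and> (\<forall>w\<in>S. sqdist p X y z \<le> sqdist p X y w))"

fun iter :: "nat \<Rightarrow> (nat \<Rightarrow> 'a pmf) \<Rightarrow> (nat \<Rightarrow> 'a pmf) \<Rightarrow> real \<Rightarrow> real \<Rightarrow> nat \<Rightarrow> (nat \<Rightarrow> real) \<times> ('a \<Rightarrow> nat \<Rightarrow> real)" where
  "iter p ph pih eta_l eta_g 0 =
     ((\<lambda>k. if k \<in> {1..p} then 1 / real p else 0),
      (\<lambda>x k. if x \<in> X0 p ph \<and> k \<in> {1..p} then 1 / real p else 0))"
| "iter p ph pih eta_l eta_g (Suc t) =
     (let lt = fst (iter p ph pih eta_l eta_g t);
          gt = snd (iter p ph pih eta_l eta_g t);
          loss = (\<lambda>k. D_KL (ph k) (pi_g p pih gt));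
          l' = (\<lambda>k. if k \<in> {1..p}
                     then lt k * exp (eta_l * loss k) / (\<Sum>j=1..p. lt j * exp (eta_l * loss j))
                     else 0);
          v = (\<lambda>x k. if x \<in> X0 p ph \<and> k \<in> {1..p}
                     then - (p_mix p ph l' x / pi_g p pih gt x) * pmf (pih k) x else 0);
          g' = proj p (X0 p ph) (G1 p ph pih) (\<lambda>x k. gt x k - eta_g * v x k)
      in (l', g'))"

definition gbar :: "nat \<Rightarrow> (nat \<Rightarrow> 'a pmf) \<Rightarrow> (nat \<Rightarrow> 'a pmf) \<Rightarrow> real \<Rightarrow> real \<Rightarrow> nat \<Rightarrow> 'a \<Rightarrow> nat \<Rightarrow> real" where
  "gbar p ph pih eta_l eta_g T = (\<lambda>x k. (1 / real T) * (\<Sum>t=1..T. snd (iter p ph pih eta_l eta_g t) x k))"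

definition Vtil :: "nat \<Rightarrow> (nat \<Rightarrow> 'a pmf) \<Rightarrow> (nat \<Rightarrow> 'a pmf) \<Rightarrow> real" where
  "Vtil p ph pih = (INF g\<in>G1 p ph pih. SUP l\<in>prob_simplex p. Ltil p ph pih l g)"

definition supKL :: "nat \<Rightarrow> (nat \<Rightarrow> 'a pmf) \<Rightarrow> (nat \<Rightarrow> 'a pmf) \<Rightarrow> real" where
  "supKL p ph pih = (SUP gk\<in>G1 p ph pih \<times> {1..p}. D_KL (ph (snd gk)) (pi_g p pih (fst gk)))"

definition supGrad :: "nat \<Rightarrow> (nat \<Rightarrow> 'a pmf) \<Rightarrow> (nat \<Rightarrow> 'a pmf) \<Rightarrow> real" where
  "supGrad p ph pih = (SUP gl\<in>G1 p ph pih \<times> prob_simplex p.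
      enorm p (X0 p ph) (grad_g p ph pih (snd gl) (fst gl)))"

end

theory Submission
  imports Defs
begin


lemma cont_eval: "continuous_on UNIV (\<lambda>g::'a\<Rightarrow>nat\<Rightarrow>real. g x k)"
proof -
  have "continuous_on UNIV (\<lambda>g::'a\<Rightarrow>nat\<Rightarrow>real. g x)" by simp
  moreover have "continuous_on UNIV (\<lambda>h::nat\<Rightarrow>real. h k)" by simp
  ultimately have "continuous_on UNIV ((\<lambda>h::nat\<Rightarrow>real. h k) \<circ> (\<lambda>g::'a\<Rightarrow>nat\<Rightarrow>real. g x))"
    by (intro continuous_on_compose) (auto intro: continuous_on_subset[of UNIV])
  then show ?thesis by (simp add: o_def)
qed

lemma compact_box: "compact {g::'a\<Rightarrow>nat\<Rightarrow>real. \<forall>x k. g x k \<in> {0..1}}"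
proof -
  have c1: "compact (PiE (UNIV::nat set) (\<lambda>_. {0..1::real}))"
    using compactin_PiE[of "\<lambda>_. euclidean" UNIV "\<lambda>_. {0..1::real}"]
    by (simp add: euclidean_product_topology)
  have c2: "compact (PiE (UNIV::'a set) (\<lambda>_. PiE (UNIV::nat set) (\<lambda>_. {0..1::real})))"
    using compactin_PiE[of "\<lambda>_. euclidean" UNIV "\<lambda>_. PiE (UNIV::nat set) (\<lambda>_. {0..1::real})"] c1
    by (simp add: euclidean_product_topology)
  have "PiE (UNIV::'a set) (\<lambda>_. PiE (UNIV::nat set) (\<lambda>_. {0..1::real})) = {g::'a\<Rightarrow>nat\<Rightarrow>real. \<forall>x k. g x k \<in> {0..1}}"
    by (auto simp: PiE_def Pi_def)
  with c2 show ?thesis by simp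
qed



definition ip :: "nat \<Rightarrow> 'a set \<Rightarrow> ('a \<Rightarrow> nat \<Rightarrow> real) \<Rightarrow> ('a \<Rightarrow> nat \<Rightarrow> real) \<Rightarrow> real" where
  "ip p X u w = (\<Sum>x\<in>X. \<Sum>k=1..p. u x k * w x k)"

locale inst =
  fixes p :: nat and ph pih :: "nat \<Rightarrow> 'a pmf"
  assumes p2: "p \<ge> 2"
    and finph: "\<forall>k\<in>{1..p}. finite (set_pmf (ph k))"
    and supp: "\<forall>k\<in>{1..p}. set_pmf (pih k) \<subseteq> X0 p ph"
    and pos: "\<forall>k\<in>{1..p}. \<forall>x\<in>X0 p ph. pmf (pih k) x > 0"
begin

abbreviation "X \<equiv> X0 p ph"

lemma finX: "finite X"
  using finph by (simp add: X0_def)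

lemma Xne: "X \<noteq> {}"
proof -
  have "1 \<in> {1..p}" using p2 by simp
  then have "set_pmf (ph 1) \<subseteq> X" by (auto simp: X0_def)
  then show ?thesis using set_pmf_not_empty[of "ph 1"] by blast
qed

lemma ph_supp: "k \<in> {1..p} \<Longrightarrow> set_pmf (ph k) \<subseteq> X"
  by (auto simp: X0_def)

lemma sum_ph: "k \<in> {1..p} \<Longrightarrow> (\<Sum>x\<in>X. pmf (ph k) x) = 1"
  using sum_pmf_eq_1[OF finX ph_supp] by simp

lemma sum_pih: "k \<in> {1..p} \<Longrightarrow> (\<Sum>x\<in>X. pmf (pih k) x) = 1"
  using sum_pmf_eq_1[OF finX] supp by simp

definition "m = Min ((\<lambda>(x,k). pmf (pih k) x) ` (X \<times> {1..p}))"

lemma m_pos: "m > 0"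
proof -
  have ne: "X \<times> {1..p} \<noteq> {}" using Xne p2 by auto
  have "finite (X \<times> {1..p})" using finX by simp
  then show ?thesis unfolding m_def using ne pos
    by (subst Min_gr_iff) auto
qed

lemma m_le: "x \<in> X \<Longrightarrow> k \<in> {1..p} \<Longrightarrow> m \<le> pmf (pih k) x"
  unfolding m_def using finX by (intro Min_le) auto

lemma gate_bounds: "is_gate p X g \<Longrightarrow> 0 \<le> g x k \<and> g x k \<le> 1"
  unfolding is_gate_def by (cases "x \<in> X \<and> k \<in> {1..p}") auto

lemma pi_ge_m: assumes "is_gate p X g" "x \<in> X" shows "pi_g p pih g x \<ge> m"
proof -
  have "m = (\<Sum>k=1..p. g x k) * m" using assms by (simp add: is_gate_def)
  also have "\<dots> = (\<Sum>k=1..p. g x k * m)" by (simp add: sum_distrib_right)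
  also have "\<dots> \<le> (\<Sum>k=1..p. g x k * pmf (pih k) x)"
    using assms gate_bounds[OF assms(1)] m_le by (intro sum_mono mult_left_mono) auto
  finally show ?thesis by (simp add: pi_g_def)
qed

lemma pi_pos: "is_gate p X g \<Longrightarrow> x \<in> X \<Longrightarrow> pi_g p pih g x > 0"
  using pi_ge_m m_pos by (meson less_le_trans)

lemma sum_pi: "g \<in> G1 p ph pih \<Longrightarrow> (\<Sum>x\<in>X. pi_g p pih g x) = 1"
  by (simp add: G1_def Z_g_def)

definition "g0 = (\<lambda>x k. if x \<in> X \<and> k \<in> {1..p} then 1 / real p else (0::real))"

lemma g0_G1: "g0 \<in> G1 p ph pih"
proof -
  have pp: "real p > 0" using p2 by simp
  have gate: "is_gate p X g0" using pp p2 by (auto simp: is_gate_def g0_def)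
  have "Z_g p ph pih g0 = (\<Sum>x\<in>X. \<Sum>k=1..p. (1 / real p) * pmf (pih k) x)"
    by (simp add: Z_g_def pi_g_def g0_def)
  also have "\<dots> = (\<Sum>k=1..p. (1 / real p) * (\<Sum>x\<in>X. pmf (pih k) x))"
    by (simp add: sum.swap[of _ X] sum_distrib_left)
  also have "\<dots> = 1" using sum_pih pp by simp
  finally show ?thesis using gate by (simp add: G1_def)
qed

lemma G1_ne: "G1 p ph pih \<noteq> {}" using g0_G1 by blast

lemma G1_convex:
  assumes "g \<in> G1 p ph pih" "h \<in> G1 p ph pih" "0 \<le> s" "s \<le> 1"
  shows "(\<lambda>x k. (1 - s) * g x k + s * h x k) \<in> G1 p ph pih"
proof -
  let ?w = "\<lambda>x k. (1 - s) * g x k + s * h x k"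
  have gg: "is_gate p X g" and hg: "is_gate p X h" using assms by (auto simp: G1_def)
  have "0 \<le> ?w x k \<and> ?w x k \<le> 1" for x k
  proof -
    have "0 \<le> g x k" "g x k \<le> 1" "0 \<le> h x k" "h x k \<le> 1" using gate_bounds gg hg by auto
    then have "(1 - s) * g x k \<le> (1 - s)" "s * h x k \<le> s" using assms
      by (auto intro: mult_left_le)
    then show ?thesis using \<open>0 \<le> g x k\<close> \<open>0 \<le> h x k\<close> assms by auto
  qed
  moreover have "(\<Sum>k=1..p. ?w x k) = 1" if "x \<in> X" for x
    using gg hg that by (simp add: sum.distrib sum_distrib_left[symmetric] is_gate_def)
  moreover have "?w x k = 0" if "x \<notin> X \<or> k \<notin> {1..p}" for x k
    using gg hg that by (simp add: is_gate_def)
  ultimately have gate: "is_gate p X ?w" by (simp add: is_gate_def)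
  have "pi_g p pih ?w x = (1 - s) * pi_g p pih g x + s * pi_g p pih h x" for x
    unfolding pi_g_def sum_distrib_left sum.distrib[symmetric] by (rule sum.cong) (auto simp: algebra_simps)
  then have "Z_g p ph pih ?w = (1 - s) * Z_g p ph pih g + s * Z_g p ph pih h"
    by (simp add: Z_g_def sum.distrib sum_distrib_left)
  also have "\<dots> = 1" using assms by (simp add: G1_def)
  finally show ?thesis using gate by (simp add: G1_def)
qed

lemma G1_closed: "closed (G1 p ph pih)"
proof -
  have eq: "G1 p ph pih = (\<Inter>x\<in>X. \<Inter>k\<in>{1..p}. {g. 0 \<le> g x k} \<inter> {g. g x k \<le> 1}) \<inter>
     (\<Inter>x\<in>X. {g. (\<Sum>k=1..p. g x k) = 1}) \<inter>
     (\<Inter>x k. {g. x \<notin> X \<or> k \<notin> {1..p} \<longrightarrow> g x k = 0}) \<inter>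
     {g. (\<Sum>x\<in>X. \<Sum>k=1..p. g x k * pmf (pih k) x) = 1}"
    by (auto simp: G1_def is_gate_def Z_g_def pi_g_def)
  have c: "continuous_on UNIV (\<lambda>g::'a\<Rightarrow>nat\<Rightarrow>real. g x k)" for x k by (rule cont_eval)
  have c1: "closed {g::'a\<Rightarrow>nat\<Rightarrow>real. 0 \<le> g x k}" for x k
    by (rule closed_Collect_le[OF continuous_on_const c])
  have c2: "closed {g::'a\<Rightarrow>nat\<Rightarrow>real. g x k \<le> 1}" for x k
    by (rule closed_Collect_le[OF c continuous_on_const])
  have c3: "closed {g::'a\<Rightarrow>nat\<Rightarrow>real. (\<Sum>k=1..p. g x k) = 1}" for x
    by (rule closed_Collect_eq[OF continuous_on_sum[OF c] continuous_on_const])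
  have c4: "closed {g::'a\<Rightarrow>nat\<Rightarrow>real. x \<notin> X \<or> k \<notin> {1..p} \<longrightarrow> g x k = 0}" for x k
  proof (cases "x \<notin> X \<or> k \<notin> {1..p}")
    case True
    then show ?thesis using closed_Collect_eq[OF c continuous_on_const, of x k 0] by simp
  next
    case False
    then show ?thesis by simp
  qed
  have c5: "closed {g::'a\<Rightarrow>nat\<Rightarrow>real. (\<Sum>x\<in>X. \<Sum>k=1..p. g x k * pmf (pih k) x) = 1}"
    by (intro closed_Collect_eq continuous_on_sum continuous_on_mult c continuous_on_const)
  show ?thesis unfolding eq
    by (intro closed_Int closed_INT ballI c1 c2 c3 c4 c5)
qed

lemma G1_compact: "compact (G1 p ph pih)"
proof -
  have "G1 p ph pih \<subseteq> {g::'a\<Rightarrow>nat\<Rightarrow>real. \<forall>x k. g x k \<in> {0..1}}"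
    using gate_bounds by (auto simp: G1_def)
  then have "G1 p ph pih = {g::'a\<Rightarrow>nat\<Rightarrow>real. \<forall>x k. g x k \<in> {0..1}} \<inter> G1 p ph pih" by blast
  then show ?thesis using compact_Int_closed[OF compact_box G1_closed] by simp
qed

end


context inst begin

lemma sqd_nonneg: "sqdist p X u w \<ge> 0"
  unfolding sqdist_def by (intro sum_nonneg) auto

lemma sqd_sym: "sqdist p X u w = sqdist p X w u"
  unfolding sqdist_def by (intro sum.cong refl) (simp add: power2_commute)

lemma sqd_expand:
  "sqdist p X y (\<lambda>x k. (1 - s) * z x k + s * g x k) =
   sqdist p X y z - 2 * s * ip p X (\<lambda>x k. y x k - z x k) (\<lambda>x k. g x k - z x k) + s^2 * sqdist p X g z"
proof -
  have "sqdist p X y (\<lambda>x k. (1 - s) * z x k + s * g x k) =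
     (\<Sum>x\<in>X. \<Sum>k=1..p. (y x k - z x k)^2 - 2 * s * ((y x k - z x k) * (g x k - z x k)) + s^2 * (g x k - z x k)^2)"
    unfolding sqdist_def by (intro sum.cong refl) (simp add: power2_eq_square algebra_simps)
  also have "\<dots> = sqdist p X y z - 2 * s * ip p X (\<lambda>x k. y x k - z x k) (\<lambda>x k. g x k - z x k) + s^2 * sqdist p X g z"
    unfolding sqdist_def ip_def by (simp add: sum.distrib sum_subtractf sum_distrib_left)
  finally show ?thesis .
qed

lemma sqd_split:
  "sqdist p X y g = sqdist p X y z + sqdist p X z g + 2 * ip p X (\<lambda>x k. y x k - z x k) (\<lambda>x k. z x k - g x k)"
proof -
  have "sqdist p X y g =
     (\<Sum>x\<in>X. \<Sum>k=1..p. (y x k - z x k)^2 + (z x k - g x k)^2 + 2 * ((y x k - z x k) * (z x k - g x k)))"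
    unfolding sqdist_def by (intro sum.cong refl) (simp add: power2_eq_square algebra_simps)
  also have "\<dots> = sqdist p X y z + sqdist p X z g + 2 * ip p X (\<lambda>x k. y x k - z x k) (\<lambda>x k. z x k - g x k)"
    unfolding sqdist_def ip_def by (simp add: sum.distrib sum_distrib_left)
  finally show ?thesis .
qed

lemma ip_neg2: "ip p X u (\<lambda>x k. z x k - g x k) = - ip p X u (\<lambda>x k. g x k - z x k)"
proof -
  have "ip p X u (\<lambda>x k. z x k - g x k) = (\<Sum>x\<in>X. \<Sum>k=1..p. - (u x k * (g x k - z x k)))"
    unfolding ip_def by (intro sum.cong refl) (simp add: algebra_simps)
  also have "\<dots> = - ip p X u (\<lambda>x k. g x k - z x k)"
    unfolding ip_def by (simp only: sum_negf)
  finally show ?thesis .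
qed

lemma sqd_zero_eq:
  assumes "sqdist p X u w \<le> 0" "is_gate p X u" "is_gate p X w"
  shows "u = w"
proof (intro ext)
  fix x k
  show "u x k = w x k"
  proof (cases "x \<in> X \<and> k \<in> {1..p}")
    case True
    have z: "sqdist p X u w = 0" using assms sqd_nonneg by (meson antisym)
    have "(\<Sum>k=1..p. (u x k - w x k)^2) = 0"
      using z True finX unfolding sqdist_def
      by (subst (asm) sum_nonneg_eq_0_iff) (auto intro: sum_nonneg)
    then have "(u x k - w x k)^2 = 0" using True by (subst (asm) sum_nonneg_eq_0_iff) auto
    then show ?thesis by simp
  next
    case False
    then show ?thesis using assms by (auto simp: is_gate_def)
  qed
qed

lemma proj_ex: "\<exists>z\<in>G1 p ph pih. \<forall>w\<in>G1 p ph pih. sqdist p X y z \<le> sqdist p X y w"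
proof -
  have c: "continuous_on UNIV (\<lambda>g::'a\<Rightarrow>nat\<Rightarrow>real. g x k)" for x k by (rule cont_eval)
  have "continuous_on (G1 p ph pih) (\<lambda>z. sqdist p X y z)"
    unfolding sqdist_def
    by (intro continuous_on_sum continuous_on_power continuous_on_diff continuous_on_const
        continuous_on_subset[OF c]) auto
  from continuous_attains_inf[OF G1_compact G1_ne this] show ?thesis by blast
qed

lemma proj_unique:
  assumes "z1 \<in> G1 p ph pih" "\<forall>w\<in>G1 p ph pih. sqdist p X y z1 \<le> sqdist p X y w"
    and "z2 \<in> G1 p ph pih" "\<forall>w\<in>G1 p ph pih. sqdist p X y z2 \<le> sqdist p X y w"
  shows "z1 = z2"
proof -
  let ?mid = "\<lambda>x k. (1 - 1/2) * z1 x k + (1/2) * z2 x k"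
  have mid: "?mid \<in> G1 p ph pih" by (rule G1_convex) (use assms in auto)
  have eq: "sqdist p X y z1 = sqdist p X y z2" using assms by (meson antisym)
  have "sqdist p X y ?mid = (sqdist p X y z1 + sqdist p X y z2) / 2 - sqdist p X z1 z2 / 4"
  proof -
    have "sqdist p X y ?mid = (\<Sum>x\<in>X. \<Sum>k=1..p. ((y x k - z1 x k)^2 + (y x k - z2 x k)^2) / 2 - (z1 x k - z2 x k)^2 / 4)"
      unfolding sqdist_def by (intro sum.cong refl) (simp add: power2_eq_square field_simps)
    also have "\<dots> = (sqdist p X y z1 + sqdist p X y z2) / 2 - sqdist p X z1 z2 / 4"
      unfolding sqdist_def by (simp add: add_divide_distrib sum.distrib sum_subtractf sum_divide_distrib[symmetric])
    finally show ?thesis .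
  qed
  moreover have "sqdist p X y z1 \<le> sqdist p X y ?mid" using assms mid by blast
  ultimately have "sqdist p X z1 z2 \<le> 0" using eq by simp
  then show ?thesis using sqd_zero_eq assms by (auto simp: G1_def)
qed

lemma proj_props:
  "proj p X (G1 p ph pih) y \<in> G1 p ph pih \<and>
   (\<forall>w\<in>G1 p ph pih. sqdist p X y (proj p X (G1 p ph pih) y) \<le> sqdist p X y w)"
proof -
  obtain z where z: "z \<in> G1 p ph pih" "\<forall>w\<in>G1 p ph pih. sqdist p X y z \<le> sqdist p X y w"
    using proj_ex by blast
  have "\<exists>!z. z \<in> G1 p ph pih \<and> (\<forall>w\<in>G1 p ph pih. sqdist p X y z \<le> sqdist p X y w)"
    using z proj_unique by blast
  then show ?thesis unfolding proj_def by (rule theI')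
qed

lemma proj_nonexp:
  assumes g: "g \<in> G1 p ph pih"
  shows "sqdist p X (proj p X (G1 p ph pih) y) g \<le> sqdist p X y g"
proof -
  define z where "z = proj p X (G1 p ph pih) y"
  have zG: "z \<in> G1 p ph pih" and zmin: "\<forall>w\<in>G1 p ph pih. sqdist p X y z \<le> sqdist p X y w"
    using proj_props unfolding z_def by auto
  define c where "c = ip p X (\<lambda>x k. y x k - z x k) (\<lambda>x k. g x k - z x k)"
  define D where "D = sqdist p X g z"
  have D0: "D \<ge> 0" unfolding D_def by (rule sqd_nonneg)
  have key: "2 * s * c \<le> s^2 * D" if "0 < s" "s \<le> 1" for s
  proof -
    have "(\<lambda>x k. (1 - s) * z x k + s * g x k) \<in> G1 p ph pih"
      using G1_convex[OF zG g] that by simp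
    then have "sqdist p X y z \<le> sqdist p X y (\<lambda>x k. (1 - s) * z x k + s * g x k)" using zmin by blast
    then show ?thesis unfolding sqd_expand c_def D_def by simp
  qed
  have c0: "c \<le> 0"
  proof (rule ccontr)
    assume "\<not> c \<le> 0"
    then have cp: "c > 0" by simp
    define s where "s = min 1 (c / (D + 1))"
    have s0: "s > 0" using cp D0 by (simp add: s_def)
    have s1: "s \<le> 1" by (simp add: s_def)
    have "s * D \<le> c / (D + 1) * D" using D0 by (intro mult_right_mono) (auto simp: s_def)
    also have "\<dots> < c" using cp D0 by (simp add: field_simps)
    finally have "s * D < c" .
    moreover have "2 * s * c \<le> s^2 * D" by (rule key[OF s0 s1])
    ultimately have "2 * s * c \<le> s * c" using s0 by (simp add: power2_eq_square)
    then show False using s0 cp by (simp add: mult_le_cancel_left)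
  qed
  have "sqdist p X y g = sqdist p X y z + sqdist p X z g - 2 * c"
    using sqd_split[of y g z] ip_neg2[of "\<lambda>x k. y x k - z x k" z g] by (simp add: c_def)
  then show ?thesis using c0 sqd_nonneg[of y z] unfolding z_def[symmetric] by simp
qed

end


lemma ln_ineq: fixes a qg qh :: real shows "a \<ge> 0 \<Longrightarrow> qg > 0 \<Longrightarrow> qh > 0 \<Longrightarrow>
  a * ln (a / qh) - a * ln (a / qg) \<ge> a * ((qg - qh) / qg)"
proof (cases "a = 0")
  case False
  assume a: "a \<ge> 0" and g: "qg > 0" and h: "qh > 0"
  then have ap: "a > 0" using False by (simp add: less_le)
  have "ln (a / qh) - ln (a / qg) = - ln (qh / qg)"
    using ap g h by (simp add: ln_div)
  moreover have "ln (qh / qg) \<le> qh / qg - 1" using g h by (intro ln_le_minus_one) simp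
  ultimately have "ln (a / qh) - ln (a / qg) \<ge> 1 - qh / qg" by linarith
  moreover have "1 - qh / qg = (qg - qh) / qg" using g by (simp add: field_simps)
  ultimately have "ln (a / qh) - ln (a / qg) \<ge> (qg - qh) / qg" by simp
  then have "a * (ln (a / qh) - ln (a / qg)) \<ge> a * ((qg - qh) / qg)" using ap by (intro mult_left_mono) auto
  then show ?thesis by (simp add: algebra_simps)
qed simp

context inst begin

lemma pmf_out: assumes "k \<in> {1..p}" "x \<notin> X" shows "pmf (ph k) x = 0"
proof -
  have "x \<notin> set_pmf (ph k)" using ph_supp assms by blast
  then show ?thesis by (simp add: set_pmf_iff)
qed

lemma KL_X: "k \<in> {1..p} \<Longrightarrow> D_KL (ph k) q = (\<Sum>x\<in>X. pmf (ph k) x * ln (pmf (ph k) x / q x))"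
  unfolding D_KL_def
  by (intro sum.mono_neutral_left finX ph_supp) (auto simp: set_pmf_iff)

lemma grad_ineq:
  assumes l: "\<forall>k\<in>{1..p}. 0 \<le> l k" and g: "\<forall>x\<in>X. pi_g p pih g x > 0" and h: "\<forall>x\<in>X. pi_g p pih h x > 0"
  shows "Ltil p ph pih l h \<ge> Ltil p ph pih l g + ip p X (grad_g p ph pih l g) (\<lambda>x k. h x k - g x k)"
proof -
  let ?qg = "pi_g p pih g" and ?qh = "pi_g p pih h"
  have "Ltil p ph pih l h - Ltil p ph pih l g =
     (\<Sum>k=1..p. l k * (\<Sum>x\<in>X. pmf (ph k) x * ln (pmf (ph k) x / ?qh x) - pmf (ph k) x * ln (pmf (ph k) x / ?qg x)))"
    unfolding Ltil_def by (simp add: KL_X sum_subtractf right_diff_distrib)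
  also have "\<dots> \<ge> (\<Sum>k=1..p. l k * (\<Sum>x\<in>X. pmf (ph k) x * ((?qg x - ?qh x) / ?qg x)))"
    using l g h by (intro sum_mono mult_left_mono ln_ineq) auto
  finally have A: "Ltil p ph pih l h - Ltil p ph pih l g \<ge>
     (\<Sum>k=1..p. l k * (\<Sum>x\<in>X. pmf (ph k) x * ((?qg x - ?qh x) / ?qg x)))" .
  have B: "(\<Sum>k=1..p. l k * (\<Sum>x\<in>X. pmf (ph k) x * ((?qg x - ?qh x) / ?qg x))) =
      (\<Sum>x\<in>X. p_mix p ph l x * ((?qg x - ?qh x) / ?qg x))"
    unfolding p_mix_def by (simp add: sum_distrib_left sum_distrib_right sum_divide_distrib sum.swap[of _ X] mult.assoc)
  have C: "ip p X (grad_g p ph pih l g) (\<lambda>x k. h x k - g x k) =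
      (\<Sum>x\<in>X. p_mix p ph l x * ((?qg x - ?qh x) / ?qg x))"
  proof -
    have "ip p X (grad_g p ph pih l g) (\<lambda>x k. h x k - g x k) =
       (\<Sum>x\<in>X. - (p_mix p ph l x / ?qg x) * (\<Sum>k=1..p. pmf (pih k) x * (h x k - g x k)))"
      unfolding ip_def grad_g_def by (intro sum.cong refl) (auto simp: sum_distrib_left mult.assoc)
    also have "\<dots> = (\<Sum>x\<in>X. - (p_mix p ph l x / ?qg x) * (?qh x - ?qg x))"
      unfolding pi_g_def by (intro sum.cong refl) (simp add: sum_subtractf algebra_simps)
    also have "\<dots> = (\<Sum>x\<in>X. p_mix p ph l x * ((?qg x - ?qh x) / ?qg x))"
      using g by (intro sum.cong refl) (auto simp: field_simps)
    finally show ?thesis .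
  qed
  show ?thesis using A B C by simp
qed

lemma KL_nonneg: assumes "g \<in> G1 p ph pih" "k \<in> {1..p}"
  shows "D_KL (ph k) (pi_g p pih g) \<ge> 0"
proof -
  have gate: "is_gate p X g" using assms by (simp add: G1_def)
  have "(\<Sum>x\<in>X. pmf (ph k) x - pi_g p pih g x) \<le> (\<Sum>x\<in>X. pmf (ph k) x * ln (pmf (ph k) x / pi_g p pih g x))"
  proof (intro sum_mono)
    fix x assume x: "x \<in> X"
    have q: "pi_g p pih g x > 0" using pi_pos gate x by simp
    show "pmf (ph k) x - pi_g p pih g x \<le> pmf (ph k) x * ln (pmf (ph k) x / pi_g p pih g x)"
    proof (cases "pmf (ph k) x = 0")
      case False
      have "pmf (ph k) x * ln (pmf (ph k) x / pi_g p pih g x) - pmf (ph k) x * ln (pmf (ph k) x / pmf (ph k) x)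
         \<ge> pmf (ph k) x * ((pmf (ph k) x - pi_g p pih g x) / pmf (ph k) x)"
        using False q pmf_nonneg[of "ph k" x] by (intro ln_ineq) (auto simp: less_le)
      then show ?thesis using False by simp
    qed (use q in simp)
  qed
  moreover have "(\<Sum>x\<in>X. pmf (ph k) x - pi_g p pih g x) = 0"
    using sum_ph[OF assms(2)] sum_pi[OF assms(1)] by (simp add: sum_subtractf)
  ultimately show ?thesis using KL_X[OF assms(2)] by simp
qed

lemma KL_le: assumes "is_gate p X g" "k \<in> {1..p}"
  shows "D_KL (ph k) (pi_g p pih g) \<le> real (card X) / m"
proof -
  have "(\<Sum>x\<in>X. pmf (ph k) x * ln (pmf (ph k) x / pi_g p pih g x)) \<le> (\<Sum>x\<in>X. 1 / m)"
  proof (intro sum_mono)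
    fix x assume x: "x \<in> X"
    let ?a = "pmf (ph k) x" and ?q = "pi_g p pih g x"
    have q: "?q \<ge> m" using pi_ge_m assms x by simp
    have qp: "?q > 0" using q m_pos by simp
    have a1: "?a \<le> 1" by (rule pmf_le_1)
    show "?a * ln (?a / ?q) \<le> 1 / m"
    proof (cases "?a = 0")
      case False
      then have ap: "?a > 0" using pmf_nonneg[of "ph k" x] by linarith
      have "?a * ln (?a / ?q) \<le> ?a * (?a / ?q - 1)"
        using ap qp by (intro mult_left_mono ln_le_minus_one) auto
      also have "\<dots> \<le> ?a * ?a / ?q" using ap qp by (simp add: field_simps)
      also have "\<dots> \<le> 1 * (1 / ?q)" using ap qp a1 mult_le_one[of ?a ?a]
        by (simp add: divide_right_mono)
      also have "\<dots> \<le> 1 / m" using q m_pos by (simp add: frac_le)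
      finally show ?thesis .
    qed (use m_pos in simp)
  qed
  then show ?thesis using KL_X[OF assms(2)] by simp
qed

lemma simplex_bound: assumes "l \<in> prob_simplex p" "\<forall>k\<in>{1..p}. f k \<le> c"
  shows "(\<Sum>k=1..p. l k * f k) \<le> c"
proof -
  have "(\<Sum>k=1..p. l k * f k) \<le> (\<Sum>k=1..p. l k * c)"
    using assms by (intro sum_mono mult_left_mono) (auto simp: prob_simplex_def)
  also have "\<dots> = c" using assms by (simp add: prob_simplex_def sum_distrib_right[symmetric])
  finally show ?thesis .
qed

lemma Ltil_le: assumes "l \<in> prob_simplex p" "is_gate p X g"
  shows "Ltil p ph pih l g \<le> real (card X) / m"
  unfolding Ltil_def using assms KL_le by (intro simplex_bound) auto

lemma pmix_bounds: assumes "l \<in> prob_simplex p" shows "0 \<le> p_mix p ph l x \<and> p_mix p ph l x \<le> 1"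
proof -
  have "0 \<le> p_mix p ph l x" unfolding p_mix_def using assms by (intro sum_nonneg) (auto simp: prob_simplex_def)
  moreover have "p_mix p ph l x \<le> 1" unfolding p_mix_def using assms pmf_le_1 by (intro simplex_bound) auto
  ultimately show ?thesis by simp
qed

lemma grad_bound: assumes "l \<in> prob_simplex p" "is_gate p X g"
  shows "\<bar>grad_g p ph pih l g x k\<bar> \<le> 1 / m"
proof (cases "x \<in> X \<and> k \<in> {1..p}")
  case True
  have q: "pi_g p pih g x \<ge> m" using pi_ge_m assms True by simp
  have qp: "pi_g p pih g x > 0" using q m_pos by simp
  have pm: "0 \<le> p_mix p ph l x" "p_mix p ph l x \<le> 1" using pmix_bounds assms by auto
  have "\<bar>grad_g p ph pih l g x k\<bar> = p_mix p ph l x / pi_g p pih g x * pmf (pih k) x"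
    using True pm qp by (simp add: grad_g_def abs_mult)
  also have "\<dots> \<le> 1 / pi_g p pih g x * 1"
    using pm qp pmf_le_1 by (intro mult_mono divide_right_mono) auto
  also have "\<dots> \<le> 1 / m" using q m_pos by (simp add: frac_le)
  finally show ?thesis .
next
  case False
  then show ?thesis using m_pos by (auto simp: grad_g_def)
qed

lemma grad_sq_bound: assumes "l \<in> prob_simplex p" "is_gate p X g"
  shows "enorm p X (grad_g p ph pih l g) \<le> sqrt (real (card X) * real p / m^2)"
proof -
  have "(\<Sum>x\<in>X. \<Sum>k=1..p. (grad_g p ph pih l g x k)^2) \<le> (\<Sum>x\<in>X. \<Sum>k=1..p. (1/m)^2)"
  proof (intro sum_mono)
    fix x k
    have "\<bar>grad_g p ph pih l g x k\<bar> \<le> 1 / m" by (rule grad_bound[OF assms])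
    then show "(grad_g p ph pih l g x k)^2 \<le> (1/m)^2"
      by (metis abs_ge_zero power2_abs power_mono)
  qed
  also have "\<dots> = real (card X) * real p / m^2" by (simp add: power_divide)
  finally show ?thesis unfolding enorm_def by simp
qed

end


lemma hedge_pos:
  fixes lam ls :: "nat \<Rightarrow> nat \<Rightarrow> real" and K :: "nat set" and eta :: real
  assumes finK: "finite K" and Kne: "K \<noteq> {}"
    and l0: "\<forall>k\<in>K. lam 0 k = 1 / real (card K)"
    and lS: "\<forall>t. \<forall>k\<in>K. lam (Suc t) k = lam t k * exp (eta * ls t k) / (\<Sum>j\<in>K. lam t j * exp (eta * ls t j))"
  shows "(\<forall>k\<in>K. lam t k > 0) \<and> (\<Sum>k\<in>K. lam t k) = 1"
proof (induction t)
  case 0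
  have "card K > 0" using finK Kne by (simp add: card_gt_0_iff)
  then show ?case using l0 by simp
next
  case (Suc t)
  define W where "W = (\<Sum>j\<in>K. lam t j * exp (eta * ls t j))"
  have W: "W > 0" unfolding W_def using Suc finK Kne by (intro sum_pos) auto
  have "\<forall>k\<in>K. lam (Suc t) k > 0" using lS Suc W unfolding W_def by auto
  moreover have "(\<Sum>k\<in>K. lam (Suc t) k) = (\<Sum>k\<in>K. lam t k * exp (eta * ls t k) / W)"
    using lS unfolding W_def by simp
  moreover have "\<dots> = 1" using W by (simp add: sum_divide_distrib[symmetric] W_def)
  ultimately show ?case by simp
qed

lemma hedge:
  fixes lam ls :: "nat \<Rightarrow> nat \<Rightarrow> real" and K :: "nat set" and eta :: real
  assumes finK: "finite K" and Kne: "K \<noteq> {}"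
    and l0: "\<forall>k\<in>K. lam 0 k = 1 / real (card K)"
    and lS: "\<forall>t. \<forall>k\<in>K. lam (Suc t) k = lam t k * exp (eta * ls t k) / (\<Sum>j\<in>K. lam t j * exp (eta * ls t j))"
    and u0: "\<forall>k\<in>K. u k \<ge> 0" and u1: "(\<Sum>k\<in>K. u k) = 1"
  shows "eta * (\<Sum>t<T. \<Sum>k\<in>K. u k * ls t k) \<le> ln (real (card K)) + eta * (\<Sum>t<T. \<Sum>k\<in>K. lam (Suc t) k * ls t k)"
proof -
  note P = hedge_pos[OF finK Kne l0 lS]
  define W where "W t = (\<Sum>j\<in>K. lam t j * exp (eta * ls t j))" for t
  have W: "W t > 0" for t unfolding W_def using P finK Kne by (intro sum_pos) auto
  have step: "ln (lam (Suc t) k) - ln (lam t k) = eta * ls t k - ln (W t)" if k: "k \<in> K" for t k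
  proof -
    have "lam (Suc t) k = lam t k * exp (eta * ls t k) / W t" using lS k unfolding W_def by simp
    moreover have "lam t k > 0" using P[of t] k by auto
    ultimately show ?thesis using W[of t] by (simp add: ln_div ln_mult)
  qed
  have lnW: "ln (W t) \<le> eta * (\<Sum>k\<in>K. lam (Suc t) k * ls t k)" for t
  proof -
    have "(\<Sum>k\<in>K. lam (Suc t) k - lam t k) \<le> (\<Sum>k\<in>K. lam (Suc t) k * (ln (lam (Suc t) k) - ln (lam t k)))"
    proof (intro sum_mono)
      fix k assume k: "k \<in> K"
      have a: "lam (Suc t) k > 0" "lam t k > 0" using P k by auto
      have "ln (lam t k / lam (Suc t) k) \<le> lam t k / lam (Suc t) k - 1" using a by (intro ln_le_minus_one) simp
      then have "ln (lam t k) - ln (lam (Suc t) k) \<le> lam t k / lam (Suc t) k - 1" using a by (simp add: ln_div)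
      then have "lam (Suc t) k * (ln (lam t k) - ln (lam (Suc t) k)) \<le> lam (Suc t) k * (lam t k / lam (Suc t) k - 1)"
        using a by (intro mult_left_mono) auto
      moreover have "lam (Suc t) k * (lam t k / lam (Suc t) k - 1) = lam t k - lam (Suc t) k"
        using a by (simp add: field_simps)
      ultimately show "lam (Suc t) k - lam t k \<le> lam (Suc t) k * (ln (lam (Suc t) k) - ln (lam t k))"
        by (simp add: right_diff_distrib)
    qed
    moreover have "(\<Sum>k\<in>K. lam (Suc t) k - lam t k) = 0" using P by (simp add: sum_subtractf)
    moreover have "(\<Sum>k\<in>K. lam (Suc t) k * (ln (lam (Suc t) k) - ln (lam t k))) =
        (\<Sum>k\<in>K. lam (Suc t) k * (eta * ls t k - ln (W t)))" using step by simp
    moreover have "\<dots> = (\<Sum>k\<in>K. eta * (lam (Suc t) k * ls t k)) - (\<Sum>k\<in>K. ln (W t) * lam (Suc t) k)"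
      by (simp add: right_diff_distrib sum_subtractf algebra_simps)
    moreover have "\<dots> = eta * (\<Sum>k\<in>K. lam (Suc t) k * ls t k) - ln (W t) * (\<Sum>k\<in>K. lam (Suc t) k)"
      by (simp only: sum_distrib_left)
    moreover have "ln (W t) * (\<Sum>k\<in>K. lam (Suc t) k) = ln (W t)" using P by simp
    ultimately show ?thesis by linarith
  qed
  have tele: "(\<Sum>k\<in>K. u k * (ln (lam T k) - ln (lam 0 k))) = (\<Sum>t<T. eta * (\<Sum>k\<in>K. u k * ls t k) - ln (W t))"
  proof -
    have "(\<Sum>k\<in>K. u k * (ln (lam T k) - ln (lam 0 k))) = (\<Sum>k\<in>K. u k * (\<Sum>t<T. ln (lam (Suc t) k) - ln (lam t k)))"
    proof (intro sum.cong refl)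
      fix k
      show "u k * (ln (lam T k) - ln (lam 0 k)) = u k * (\<Sum>t<T. ln (lam (Suc t) k) - ln (lam t k))"
        using sum_lessThan_telescope[of "\<lambda>t. ln (lam t k)" T] by simp
    qed
    also have "\<dots> = (\<Sum>k\<in>K. u k * (\<Sum>t<T. eta * ls t k - ln (W t)))"
      using step by simp
    also have "\<dots> = (\<Sum>t<T. \<Sum>k\<in>K. u k * (eta * ls t k - ln (W t)))"
      by (simp add: sum_distrib_left sum.swap[of _ K])
    also have "\<dots> = (\<Sum>t<T. (\<Sum>k\<in>K. eta * (u k * ls t k)) - (\<Sum>k\<in>K. ln (W t) * u k))"
      by (simp add: right_diff_distrib sum_subtractf algebra_simps)
    also have "\<dots> = (\<Sum>t<T. eta * (\<Sum>k\<in>K. u k * ls t k) - ln (W t) * (\<Sum>k\<in>K. u k))"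
      by (simp only: sum_distrib_left)
    also have "\<dots> = (\<Sum>t<T. eta * (\<Sum>k\<in>K. u k * ls t k) - ln (W t))"
      using u1 by simp
    finally show ?thesis .
  qed
  have lhs: "(\<Sum>k\<in>K. u k * (ln (lam T k) - ln (lam 0 k))) \<le> ln (real (card K))"
  proof -
    have "(\<Sum>k\<in>K. u k * (ln (lam T k) - ln (lam 0 k))) \<le> (\<Sum>k\<in>K. u k * ln (real (card K)))"
    proof (intro sum_mono mult_left_mono)
      fix k assume k: "k \<in> K"
      have "lam T k \<le> (\<Sum>j\<in>K. lam T j)" using P[of T] k finK
        by (intro member_le_sum) (auto simp: less_imp_le)
      then have "lam T k \<le> 1" using P[of T] by simp
      then have "ln (lam T k) \<le> 0" using P k by simp
      moreover have "ln (lam 0 k) = - ln (real (card K))" using l0 k by (simp add: ln_div)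
      ultimately show "ln (lam T k) - ln (lam 0 k) \<le> ln (real (card K))" by simp
    qed (use u0 in auto)
    also have "\<dots> = ln (real (card K))" using u1 by (simp add: sum_distrib_right[symmetric])
    finally show ?thesis .
  qed
  have "eta * (\<Sum>t<T. \<Sum>k\<in>K. u k * ls t k) - (\<Sum>t<T. ln (W t)) \<le> ln (real (card K))"
    using tele lhs by (simp add: sum_subtractf sum_distrib_left)
  moreover have "(\<Sum>t<T. ln (W t)) \<le> eta * (\<Sum>t<T. \<Sum>k\<in>K. lam (Suc t) k * ls t k)"
    using lnW by (simp add: sum_distrib_left sum_mono)
  ultimately show ?thesis by linarith
qed



context inst begin

abbreviation "s1 \<equiv> supKL p ph pih"
abbreviation "s2 \<equiv> supGrad p ph pih"

definition "lam0 = (\<lambda>k. if k \<in> {1..p} then 1 / real p else (0::real))"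

lemma lam0_simplex: "lam0 \<in> prob_simplex p"
  using p2 by (auto simp: prob_simplex_def lam0_def)

lemma simplex_ne: "prob_simplex p \<noteq> {}" using lam0_simplex by blast

lemma KL_le_s1: assumes "g \<in> G1 p ph pih" "k \<in> {1..p}"
  shows "D_KL (ph k) (pi_g p pih g) \<le> s1"
proof -
  have "bdd_above ((\<lambda>gk. D_KL (ph (snd gk)) (pi_g p pih (fst gk))) ` (G1 p ph pih \<times> {1..p}))"
    by (rule bdd_aboveI2[where M = "real (card X) / m"]) (auto intro: KL_le simp: G1_def)
  then show ?thesis unfolding supKL_def
    using cSUP_upper[of "(g,k)" "G1 p ph pih \<times> {1..p}" "\<lambda>gk. D_KL (ph (snd gk)) (pi_g p pih (fst gk))"] assms
    by auto
qed

lemma s1_nonneg: "s1 \<ge> 0"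
proof -
  have "1 \<in> {1..p}" using p2 by simp
  then show ?thesis using KL_le_s1[OF g0_G1] KL_nonneg[OF g0_G1] by (meson order_trans)
qed

lemma grad_le_s2: assumes "g \<in> G1 p ph pih" "l \<in> prob_simplex p"
  shows "enorm p X (grad_g p ph pih l g) \<le> s2"
proof -
  have "bdd_above ((\<lambda>gl. enorm p X (grad_g p ph pih (snd gl) (fst gl))) ` (G1 p ph pih \<times> prob_simplex p))"
    by (rule bdd_aboveI2[where M = "sqrt (real (card X) * real p / m^2)"]) (auto intro: grad_sq_bound simp: G1_def)
  then show ?thesis unfolding supGrad_def
    using cSUP_upper[of "(g,l)" "G1 p ph pih \<times> prob_simplex p" "\<lambda>gl. enorm p X (grad_g p ph pih (snd gl) (fst gl))"] assms
    by auto
qed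

lemma ip_self: "ip p X v v = (enorm p X v)^2"
proof -
  have "ip p X v v = (\<Sum>x\<in>X. \<Sum>k=1..p. (v x k)^2)" unfolding ip_def by (simp add: power2_eq_square)
  moreover have "(\<Sum>x\<in>X. \<Sum>k=1..p. (v x k)^2) \<ge> 0" by (intro sum_nonneg) auto
  ultimately show ?thesis unfolding enorm_def by simp
qed

lemma sqd_step:
  "sqdist p X (\<lambda>x k. a x k - e * v x k) b = sqdist p X a b - 2 * e * ip p X v (\<lambda>x k. a x k - b x k) + e^2 * ip p X v v"
proof -
  have "sqdist p X (\<lambda>x k. a x k - e * v x k) b =
     (\<Sum>x\<in>X. \<Sum>k=1..p. (a x k - b x k)^2 - 2 * e * (v x k * (a x k - b x k)) + e^2 * (v x k * v x k))"
    unfolding sqdist_def by (intro sum.cong refl) (simp add: power2_eq_square algebra_simps)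
  also have "\<dots> = sqdist p X a b - 2 * e * ip p X v (\<lambda>x k. a x k - b x k) + e^2 * ip p X v v"
    unfolding sqdist_def ip_def by (simp add: sum.distrib sum_subtractf sum_distrib_left)
  finally show ?thesis .
qed

lemma sqd_g0: assumes "g \<in> G1 p ph pih" shows "sqdist p X g0 g \<le> real (card X) * real p"
proof -
  have gate0: "is_gate p X g0" and gate: "is_gate p X g" using g0_G1 assms by (auto simp: G1_def)
  have "sqdist p X g0 g \<le> (\<Sum>x\<in>X. \<Sum>k=1..p. (1::real))"
    unfolding sqdist_def
  proof (intro sum_mono)
    fix x k
    have "0 \<le> g0 x k" "g0 x k \<le> 1" "0 \<le> g x k" "g x k \<le> 1" using gate_bounds gate0 gate by auto
    then have "\<bar>g0 x k - g x k\<bar> \<le> 1" by simp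
    then show "(g0 x k - g x k)^2 \<le> 1"
      by (metis abs_ge_zero abs_power2 power2_abs power_le_one)
  qed
  then show ?thesis by simp
qed

end


context inst begin

context
  fixes eta eps :: real
begin

definition "lam t = fst (iter p ph pih eta eps t)"
definition "gg t = snd (iter p ph pih eta eps t)"
definition "ls t k = D_KL (ph k) (pi_g p pih (gg t))"

lemma lam_0: "lam 0 = lam0" by (simp add: lam_def lam0_def)
lemma gg_0: "gg 0 = g0" by (simp add: gg_def g0_def)

lemma lam_Suc: "lam (Suc t) = (\<lambda>k. if k \<in> {1..p}
     then lam t k * exp (eta * ls t k) / (\<Sum>j=1..p. lam t j * exp (eta * ls t j)) else 0)"
  unfolding lam_def gg_def ls_def by (simp add: Let_def)

lemma gg_Suc: "gg (Suc t) = proj p X (G1 p ph pih) (\<lambda>x k. gg t x k - eps * grad_g p ph pih (lam (Suc t)) (gg t) x k)"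
proof -
  show ?thesis
    unfolding lam_def gg_def ls_def by (simp add: Let_def grad_g_def)
qed

lemma lam_pos: "(\<forall>k\<in>{1..p}. lam t k > 0) \<and> (\<Sum>k\<in>{1..p}. lam t k) = 1"
proof (rule hedge_pos[where ls = ls and eta = eta])
  show "finite {1..p}" by simp
  show "{1..p} \<noteq> {}" using p2 by simp
  show "\<forall>k\<in>{1..p}. lam 0 k = 1 / real (card {1..p})" by (simp add: lam_0 lam0_def)
  show "\<forall>t. \<forall>k\<in>{1..p}. lam (Suc t) k = lam t k * exp (eta * ls t k) / (\<Sum>j\<in>{1..p}. lam t j * exp (eta * ls t j))"
    by (simp add: lam_Suc)
qed

lemma lam_simplex: "lam t \<in> prob_simplex p"
proof (cases t)
  case 0
  then show ?thesis using lam0_simplex lam_0 by simp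
next
  case (Suc s)
  have "lam (Suc s) k = 0" if "k \<notin> {1..p}" for k using that unfolding lam_Suc by auto
  then show ?thesis using lam_pos[of t] Suc by (auto simp: prob_simplex_def less_imp_le)
qed

lemma gg_G1: "gg t \<in> G1 p ph pih"
proof (induction t)
  case 0
  then show ?case using g0_G1 gg_0 by simp
next
  case (Suc t)
  then show ?case using proj_props gg_Suc by simp
qed

lemma gg_gate: "is_gate p X (gg t)" using gg_G1 by (simp add: G1_def)

lemma hedge_inst: assumes u: "u \<in> prob_simplex p"
  shows "eta * (\<Sum>t<T. Ltil p ph pih u (gg t)) \<le> ln (real p) + eta * (\<Sum>t<T. Ltil p ph pih (lam (Suc t)) (gg t))"
proof -
  have "eta * (\<Sum>t<T. \<Sum>k\<in>{1..p}. u k * ls t k) \<le> ln (real (card {1..p})) + eta * (\<Sum>t<T. \<Sum>k\<in>{1..p}. lam (Suc t) k * ls t k)"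
  proof (rule hedge)
    show "finite {1..p}" by simp
    show "{1..p} \<noteq> {}" using p2 by simp
    show "\<forall>k\<in>{1..p}. lam 0 k = 1 / real (card {1..p})" by (simp add: lam_0 lam0_def)
    show "\<forall>t. \<forall>k\<in>{1..p}. lam (Suc t) k = lam t k * exp (eta * ls t k) / (\<Sum>j\<in>{1..p}. lam t j * exp (eta * ls t j))"
      by (simp add: lam_Suc)
    show "\<forall>k\<in>{1..p}. 0 \<le> u k" "(\<Sum>k\<in>{1..p}. u k) = 1" using u by (auto simp: prob_simplex_def)
  qed
  then show ?thesis by (simp add: Ltil_def ls_def)
qed


lemma ogd: assumes eps: "eps > 0" and g: "g \<in> G1 p ph pih"
  shows "(\<Sum>t<T. Ltil p ph pih (lam (Suc t)) (gg t)) \<le> (\<Sum>t<T. Ltil p ph pih (lam (Suc t)) g)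
     + real (card X) * real p / (2 * eps) + real T * eps * s2^2 / 2"
proof -
  define v where "v t = grad_g p ph pih (lam (Suc t)) (gg t)" for t
  define c where "c t = ip p X (v t) (\<lambda>x k. gg t x k - g x k)" for t
  define D where "D t = sqdist p X (gg t) g" for t
  have gate: "is_gate p X g" using g by (simp add: G1_def)
  have A: "Ltil p ph pih (lam (Suc t)) (gg t) \<le> Ltil p ph pih (lam (Suc t)) g + c t" for t
  proof -
    have "Ltil p ph pih (lam (Suc t)) g \<ge> Ltil p ph pih (lam (Suc t)) (gg t) + ip p X (v t) (\<lambda>x k. g x k - gg t x k)"
      unfolding v_def using lam_simplex[of "Suc t"] pi_pos gg_gate gate
      by (intro grad_ineq) (auto simp: prob_simplex_def)
    moreover have "c t = - ip p X (v t) (\<lambda>x k. g x k - gg t x k)"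
      unfolding c_def by (rule ip_neg2)
    ultimately show ?thesis by simp
  qed
  have B: "2 * eps * c t \<le> D t - D (Suc t) + eps^2 * s2^2" for t
  proof -
    have "D (Suc t) \<le> sqdist p X (\<lambda>x k. gg t x k - eps * v t x k) g"
      unfolding D_def gg_Suc v_def using proj_nonexp[OF g] by blast
    also have "\<dots> = D t - 2 * eps * c t + eps^2 * ip p X (v t) (v t)"
      unfolding sqd_step D_def c_def by simp
    finally have 1: "D (Suc t) \<le> D t - 2 * eps * c t + eps^2 * ip p X (v t) (v t)" .
    have "enorm p X (v t) \<le> s2" unfolding v_def using grad_le_s2[OF gg_G1 lam_simplex] .
    moreover have "enorm p X (v t) \<ge> 0" unfolding enorm_def by (intro real_sqrt_ge_zero sum_nonneg) auto
    ultimately have "ip p X (v t) (v t) \<le> s2^2" unfolding ip_self by (intro power_mono) auto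
    then have "eps^2 * ip p X (v t) (v t) \<le> eps^2 * s2^2" by (intro mult_left_mono) auto
    with 1 show ?thesis by linarith
  qed
  have "2 * eps * (\<Sum>t<T. c t) \<le> (\<Sum>t<T. D t - D (Suc t) + eps^2 * s2^2)"
    unfolding sum_distrib_left by (intro sum_mono B)
  also have "\<dots> = D 0 - D T + real T * (eps^2 * s2^2)"
    by (simp add: sum.distrib sum_lessThan_telescope')
  also have "\<dots> \<le> real (card X) * real p + real T * (eps^2 * s2^2)"
    using sqd_g0[OF g] sqd_nonneg[of "gg T" g] unfolding D_def gg_0 by simp
  finally have "2 * eps * (\<Sum>t<T. c t) \<le> real (card X) * real p + real T * (eps^2 * s2^2)" .
  then have C: "(\<Sum>t<T. c t) \<le> real (card X) * real p / (2 * eps) + real T * eps * s2^2 / 2"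
    using eps by (simp add: field_simps power2_eq_square)
  have "(\<Sum>t<T. Ltil p ph pih (lam (Suc t)) (gg t)) \<le> (\<Sum>t<T. Ltil p ph pih (lam (Suc t)) g + c t)"
    by (intro sum_mono A)
  also have "\<dots> = (\<Sum>t<T. Ltil p ph pih (lam (Suc t)) g) + (\<Sum>t<T. c t)" by (simp add: sum.distrib)
  finally show ?thesis using C by linarith
qed


lemma gbar_convex: assumes T: "T \<ge> 1" and u: "u \<in> prob_simplex p"
  shows "real T * Ltil p ph pih u (gbar p ph pih eta eps T) \<le> (\<Sum>t=1..T. Ltil p ph pih u (gg t))"
proof -
  define gb where "gb = gbar p ph pih eta eps T"
  have gb: "gb x k = (1 / real T) * (\<Sum>t=1..T. gg t x k)" for x k
    by (simp add: gb_def gbar_def gg_def)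
  have Tp: "real T > 0" using T by simp
  have pig: "pi_g p pih gb x = (1 / real T) * (\<Sum>t=1..T. pi_g p pih (gg t) x)" for x
  proof -
    have "pi_g p pih gb x = (\<Sum>k=1..p. \<Sum>t=1..T. (1 / real T) * (gg t x k * pmf (pih k) x))"
      unfolding pi_g_def gb by (simp add: sum_distrib_left sum_distrib_right mult.assoc)
    also have "\<dots> = (\<Sum>t=1..T. \<Sum>k=1..p. (1 / real T) * (gg t x k * pmf (pih k) x))"
      by (rule sum.swap)
    also have "\<dots> = (1 / real T) * (\<Sum>t=1..T. pi_g p pih (gg t) x)"
      unfolding pi_g_def by (simp add: sum_distrib_left)
    finally show ?thesis .
  qed
  have pigpos: "\<forall>x\<in>X. pi_g p pih gb x > 0"
  proof
    fix x assume x: "x \<in> X"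
    have "(\<Sum>t=1..T. pi_g p pih (gg t) x) > 0" using T pi_pos[OF gg_gate x] by (intro sum_pos) auto
    then show "pi_g p pih gb x > 0" unfolding pig using Tp by simp
  qed
  define w where "w = grad_g p ph pih u gb"
  have A: "Ltil p ph pih u (gg t) \<ge> Ltil p ph pih u gb + ip p X w (\<lambda>x k. gg t x k - gb x k)" for t
    unfolding w_def using u pigpos pi_pos gg_gate by (intro grad_ineq) (auto simp: prob_simplex_def)
  have zero: "(\<Sum>t=1..T. gg t x k - gb x k) = 0" for x k
    using Tp by (simp add: sum_subtractf gb)
  have B: "(\<Sum>t=1..T. ip p X w (\<lambda>x k. gg t x k - gb x k)) = 0"
  proof -
    have "(\<Sum>t=1..T. ip p X w (\<lambda>x k. gg t x k - gb x k)) = (\<Sum>x\<in>X. \<Sum>k=1..p. w x k * (\<Sum>t=1..T. gg t x k - gb x k))"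
    proof -
      have "(\<Sum>t=1..T. ip p X w (\<lambda>x k. gg t x k - gb x k)) = (\<Sum>t=1..T. \<Sum>x\<in>X. \<Sum>k=1..p. w x k * (gg t x k - gb x k))"
        unfolding ip_def by simp
      also have "\<dots> = (\<Sum>x\<in>X. \<Sum>t=1..T. \<Sum>k=1..p. w x k * (gg t x k - gb x k))" by (rule sum.swap)
      also have "\<dots> = (\<Sum>x\<in>X. \<Sum>k=1..p. \<Sum>t=1..T. w x k * (gg t x k - gb x k))"
        by (rule sum.cong[OF refl], rule sum.swap)
      also have "\<dots> = (\<Sum>x\<in>X. \<Sum>k=1..p. w x k * (\<Sum>t=1..T. gg t x k - gb x k))"
        by (simp only: sum_distrib_left)
      finally show ?thesis .
    qed
    also have "\<dots> = 0" by (simp only: zero mult_zero_right sum.neutral_const)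
    finally show ?thesis .
  qed
  have "(\<Sum>t=1..T. Ltil p ph pih u gb + ip p X w (\<lambda>x k. gg t x k - gb x k)) \<le> (\<Sum>t=1..T. Ltil p ph pih u (gg t))"
    by (intro sum_mono A)
  moreover have "(\<Sum>t=1..T. Ltil p ph pih u gb + ip p X w (\<lambda>x k. gg t x k - gb x k)) = real T * Ltil p ph pih u gb"
    using B by (simp add: sum.distrib)
  ultimately show ?thesis unfolding gb_def by simp
qed

lemma Ltil_le_s1: assumes "u \<in> prob_simplex p" "g \<in> G1 p ph pih" shows "Ltil p ph pih u g \<le> s1"
  unfolding Ltil_def using assms KL_le_s1 by (intro simplex_bound) auto

lemma Ltil_nonneg: assumes "u \<in> prob_simplex p" "g \<in> G1 p ph pih" shows "Ltil p ph pih u g \<ge> 0"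
  unfolding Ltil_def using assms KL_nonneg by (intro sum_nonneg mult_nonneg_nonneg) (auto simp: prob_simplex_def)

lemma Ltil_le_M: assumes "l \<in> prob_simplex p" "g \<in> G1 p ph pih"
  shows "Ltil p ph pih l g \<le> (SUP l\<in>prob_simplex p. Ltil p ph pih l g)"
proof -
  have "bdd_above ((\<lambda>l. Ltil p ph pih l g) ` prob_simplex p)"
    using assms by (intro bdd_aboveI2[where M = "real (card X) / m"] Ltil_le) (auto simp: G1_def)
  then show ?thesis using assms by (intro cSUP_upper) auto
qed

lemma bound: assumes T: "T \<ge> 1" and eta: "eta > 0" and eps: "eps > 0"
  and u: "u \<in> prob_simplex p" and g: "g \<in> G1 p ph pih"
  shows "real T * Ltil p ph pih u (gbar p ph pih eta eps T) \<le>
     ln (real p) / eta + real T * (SUP l\<in>prob_simplex p. Ltil p ph pih l g)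
     + real (card X) * real p / (2 * eps) + real T * eps * s2^2 / 2 + s1"
proof -
  define F where "F t = Ltil p ph pih u (gg t)" for t
  define M where "M = (SUP l\<in>prob_simplex p. Ltil p ph pih l g)"
  define R where "R = real (card X) * real p / (2 * eps) + real T * eps * s2^2 / 2"
  have "(\<Sum>t=1..T. F t) = (\<Sum>t<T. F (Suc t))" by (simp add: sum.atLeast1_atMost_eq)
  also have "\<dots> = (\<Sum>t<T. F t) + (F T - F 0)"
    using sum_lessThan_telescope[of F T] by (simp add: sum_subtractf)
  also have "\<dots> \<le> (\<Sum>t<T. F t) + s1"
    using Ltil_le_s1[OF u gg_G1] Ltil_nonneg[OF u gg_G1] unfolding F_def by (smt (verit))
  finally have 1: "(\<Sum>t=1..T. F t) \<le> (\<Sum>t<T. F t) + s1" .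
  have "(\<Sum>t<T. Ltil p ph pih (lam (Suc t)) g) \<le> (\<Sum>t<T. M)"
    unfolding M_def by (intro sum_mono Ltil_le_M lam_simplex g)
  then have "(\<Sum>t<T. Ltil p ph pih (lam (Suc t)) (gg t)) \<le> real T * M + R"
    using ogd[OF eps g, of T] unfolding R_def by simp
  then have "eta * (\<Sum>t<T. F t) \<le> ln (real p) + eta * (real T * M + R)"
    using hedge_inst[OF u, of T] eta unfolding F_def
    by (smt (verit) mult_left_mono)
  then have "(\<Sum>t<T. F t) \<le> ln (real p) / eta + (real T * M + R)"
    using eta by (simp add: field_simps)
  then show ?thesis using gbar_convex[OF T u] 1 unfolding F_def M_def R_def by linarith
qed

end
end


context inst begin

lemma final: assumes T: "T \<ge> 1"
  shows "(SUP u\<in>prob_simplex p. Ltil p ph pih u (gbar p ph pih (1 / sqrt (real T)) (1 / sqrt (real T)) T))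
     - Vtil p ph pih \<le> (ln (real p) + real (card X) * real p / 2 + s2^2 / 2 + s1) / sqrt (real T)"
proof -
  define r where "r = sqrt (real T)"
  define Kc where "Kc = ln (real p) + real (card X) * real p / 2 + s2^2 / 2 + s1"
  have r1: "r \<ge> 1" using T by (simp add: r_def)
  have rT: "real T = r^2" using T by (simp add: r_def)
  have key: "Ltil p ph pih u (gbar p ph pih (1 / r) (1 / r) T) \<le> (SUP l\<in>prob_simplex p. Ltil p ph pih l g) + Kc / r"
    if u: "u \<in> prob_simplex p" and g: "g \<in> G1 p ph pih" for u g
  proof -
    define L where "L = Ltil p ph pih u (gbar p ph pih (1 / r) (1 / r) T)"
    define M where "M = (SUP l\<in>prob_simplex p. Ltil p ph pih l g)"
    have "real T * L \<le> ln (real p) / (1 / r) + real T * M + real (card X) * real p / (2 * (1 / r))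
        + real T * (1 / r) * s2^2 / 2 + s1"
      unfolding L_def M_def using bound[OF T _ _ u g, of "1 / r" "1 / r"] r1 by simp
    also have "\<dots> = r^2 * M + r * (ln (real p) + real (card X) * real p / 2 + s2^2 / 2) + s1"
      using r1 unfolding rT by (simp add: field_simps power2_eq_square)
    also have "\<dots> \<le> r^2 * M + r * Kc"
    proof -
      have "s1 \<le> r * s1" using r1 s1_nonneg by (simp add: mult_le_cancel_right1)
      then show ?thesis unfolding Kc_def by (simp add: algebra_simps)
    qed
    finally have "r^2 * L \<le> r^2 * M + r * Kc" unfolding rT .
    moreover have "r^2 * (M + Kc / r) = r^2 * M + r * Kc" using r1 by (simp add: field_simps power2_eq_square)
    ultimately have "r^2 * L \<le> r^2 * (M + Kc / r)" by simp
    then show ?thesis unfolding L_def M_def using r1 by (simp add: mult_le_cancel_left)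
  qed
  define S where "S = (SUP u\<in>prob_simplex p. Ltil p ph pih u (gbar p ph pih (1 / r) (1 / r) T))"
  have "S - Kc / r \<le> (SUP l\<in>prob_simplex p. Ltil p ph pih l g)" if g: "g \<in> G1 p ph pih" for g
  proof -
    have "S \<le> (SUP l\<in>prob_simplex p. Ltil p ph pih l g) + Kc / r"
      unfolding S_def using key g by (intro cSUP_least simplex_ne) auto
    then show ?thesis by simp
  qed
  then have "S - Kc / r \<le> Vtil p ph pih" unfolding Vtil_def by (intro cINF_greatest G1_ne) auto
  then show ?thesis unfolding S_def Kc_def r_def by simp
qed

end

definition Kset :: "('a \<Rightarrow> nat \<Rightarrow> real) set \<Rightarrow> nat set" where
  "Kset S = {k. \<exists>g\<in>S. \<exists>x. g x k \<noteq> 0}"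
definition Xset :: "('a \<Rightarrow> nat \<Rightarrow> real) set \<Rightarrow> 'a set" where
  "Xset S = {x. \<exists>g\<in>S. \<exists>k. g x k \<noteq> 0}"

context inst begin

lemma Kset_G1: "Kset (G1 p ph pih) = {1..p}"
proof
  show "Kset (G1 p ph pih) \<subseteq> {1..p}"
    unfolding Kset_def G1_def is_gate_def by blast
  show "{1..p} \<subseteq> Kset (G1 p ph pih)"
  proof
    fix k assume k: "k \<in> {1..p}"
    obtain x where x: "x \<in> X" using Xne by blast
    have "g0 x k \<noteq> 0" using k x p2 by (simp add: g0_def)
    then show "k \<in> Kset (G1 p ph pih)" unfolding Kset_def using g0_G1 by blast
  qed
qed

lemma Xset_G1: "Xset (G1 p ph pih) = X"
proof
  show "Xset (G1 p ph pih) \<subseteq> X"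
    unfolding Xset_def G1_def is_gate_def by blast
  show "X \<subseteq> Xset (G1 p ph pih)"
  proof
    fix x assume x: "x \<in> X"
    have "g0 x 1 \<noteq> 0" using x p2 by (simp add: g0_def)
    then show "x \<in> Xset (G1 p ph pih)" unfolding Xset_def using g0_G1 by blast
  qed
qed

end

theorem mainTheorem12:
  "\<exists>(A :: ('a \<Rightarrow> nat \<Rightarrow> real) set \<Rightarrow> real \<Rightarrow> real \<Rightarrow> real) B Cc.
    \<forall>(p::nat) (ph :: nat \<Rightarrow> 'a pmf) (pih :: nat \<Rightarrow> 'a pmf).
      p \<ge> 2 \<and>
      (\<forall>k\<in>{1..p}. finite (set_pmf (ph k))) \<and>
      (\<forall>k\<in>{1..p}. set_pmf (pih k) \<subseteq> X0 p ph) \<and>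
      (\<forall>k\<in>{1..p}. \<forall>x\<in>X0 p ph. pmf (pih k) x > 0)
      \<longrightarrow>
      (let a = A (G1 p ph pih) (supKL p ph pih) (supGrad p ph pih);
           b = B (G1 p ph pih) (supKL p ph pih) (supGrad p ph pih);
           C = Cc (G1 p ph pih) (supKL p ph pih) (supGrad p ph pih)
       in a > 0 \<and> b > 0 \<and> C > 0 \<and>
          (\<forall>T::nat. T \<ge> 1 \<longrightarrow>
            (SUP l\<in>prob_simplex p.
               Ltil p ph pih l (gbar p ph pih (a / sqrt (real T)) (b / sqrt (real T)) T))
              - Vtil p ph pih
            \<le> C * sqrt (ln (real p) / real T)))"
proof (intro exI allI impI)
  fix p :: nat and ph pih :: "nat \<Rightarrow> 'a pmf"
  let ?Cc = "\<lambda>(S::('a \<Rightarrow> nat \<Rightarrow> real) set) (s1::real) (s2::real).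
     (ln (real (card (Kset S))) + real (card (Xset S)) * real (card (Kset S)) / 2 + s2^2 / 2 + s1)
       / sqrt (ln (real (card (Kset S)))) + 1"
  assume H: "p \<ge> 2 \<and>
      (\<forall>k\<in>{1..p}. finite (set_pmf (ph k))) \<and>
      (\<forall>k\<in>{1..p}. set_pmf (pih k) \<subseteq> X0 p ph) \<and>
      (\<forall>k\<in>{1..p}. \<forall>x\<in>X0 p ph. pmf (pih k) x > 0)"
  then interpret I: inst p ph pih by unfold_locales auto
  define Kc where "Kc = ln (real p) + real (card (X0 p ph)) * real p / 2 + (supGrad p ph pih)^2 / 2 + supKL p ph pih"
  have lnp: "ln (real p) > 0" using H by simp
  have Kc0: "Kc \<ge> 0" unfolding Kc_def using lnp I.s1_nonneg by simp
  have C: "?Cc (G1 p ph pih) (supKL p ph pih) (supGrad p ph pih) = Kc / sqrt (ln (real p)) + 1"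
    unfolding Kc_def I.Kset_G1 I.Xset_G1 by simp
  have Cpos: "Kc / sqrt (ln (real p)) + 1 > 0" using Kc0 lnp by (simp add: add_nonneg_pos)
  have "(SUP l\<in>prob_simplex p. Ltil p ph pih l (gbar p ph pih (1 / sqrt (real T)) (1 / sqrt (real T)) T))
              - Vtil p ph pih \<le> (Kc / sqrt (ln (real p)) + 1) * sqrt (ln (real p) / real T)"
    if T: "T \<ge> 1" for T :: nat
  proof -
    have "(SUP l\<in>prob_simplex p. Ltil p ph pih l (gbar p ph pih (1 / sqrt (real T)) (1 / sqrt (real T)) T))
              - Vtil p ph pih \<le> Kc / sqrt (real T)"
      using I.final[OF T] unfolding Kc_def .
    also have "\<dots> \<le> (Kc / sqrt (ln (real p)) + 1) * sqrt (ln (real p) / real T)"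
    proof -
      have sT: "sqrt (real T) > 0" using T by simp
      have sl: "sqrt (ln (real p)) > 0" using lnp by simp
      have "(Kc / sqrt (ln (real p)) + 1) * sqrt (ln (real p) / real T)
          = (Kc + sqrt (ln (real p))) / sqrt (real T)"
        using sT sl by (simp add: real_sqrt_divide field_simps)
      also have "\<dots> \<ge> Kc / sqrt (real T)" using sT sl by (simp add: divide_right_mono)
      finally show ?thesis .
    qed
    finally show ?thesis .
  qed
  then show "let a = (\<lambda>S s1 s2. 1) (G1 p ph pih) (supKL p ph pih) (supGrad p ph pih);
           b = (\<lambda>S s1 s2. 1) (G1 p ph pih) (supKL p ph pih) (supGrad p ph pih);
           C = ?Cc (G1 p ph pih) (supKL p ph pih) (supGrad p ph pih)
       in a > 0 \<and> b > 0 \<and> C > 0 \<and>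
          (\<forall>T::nat. T \<ge> 1 \<longrightarrow>
            (SUP l\<in>prob_simplex p.
               Ltil p ph pih l (gbar p ph pih (a / sqrt (real T)) (b / sqrt (real T)) T))
              - Vtil p ph pih
            \<le> C * sqrt (ln (real p) / real T))"
    unfolding Let_def C using Cpos by simp
qed


end
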